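(* For every $n\ge 1$ and every $\pi\in S_n$, the permutation $\pi$ is $(n-1)$-stack-sortable under $s_{1\dot{2}}$, i.e. $s_{1\dot{2}}^{\,n-1}(\pi)=12\cdots n$.
   Context: The $1\dot{2}$-avoiding stack-sorting map $s_{1\dot{2}}$ is defined as follows. Start with the input $\pi$ and an empty stack. Repeat the following step until both the input and the stack are empty: - If input remains, and either the stack is empty or the next input entry is smaller than the entry at the bottom of the stack, push the next input entry onto the top of the stack. - Otherwise, pop the top entry of the stack and append it to the output. The output word is $s_{1\dot{2}}(\pi)$. For an integer $t\ge 0$, a permutation $\pi\in S_n$ is called $t$-stack-sortable (under $s_{1\dot{2}}$) if $s_{1\dot{2}}^{\,t}(\pi)$, the $t$-fold iterate applied to $\pi$, equals the identity $12\cdots n$. *)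

theory Defs
  imports Main
begin

text \<open>The stack is a list whose head is the
top of the stack and whose last element is the bottom of the stack.\<close>

function stk_aux :: "nat list \<Rightarrow> nat list \<Rightarrow> nat list" where
  "stk_aux [] [] = []"
| "stk_aux (x # xs) st =
     (if st = [] \<or> x < last st then stk_aux xs (x # st)
      else hd st # stk_aux (x # xs) (tl st))"
| "stk_aux [] (y # ys) = y # stk_aux [] ys"
  by pat_completeness auto
termination
  by (relation "measure (\<lambda>(inp, st). 2 * length inp + length st)") auto

definition s12dot :: "nat list \<Rightarrow> nat list" where
  "s12dot \<pi> = stk_aux \<pi> []"

definition is_perm :: "nat \<Rightarrow> nat list \<Rightarrow> bool" where
  "is_perm n \<pi> \<longleftrightarrow> length \<pi> = n \<and> distinct \<pi> \<and> set \<pi> = {1..n}"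

end

theory Submission
  imports Defs "HOL-Library.Multiset"
begin

lemma stk_push: "st = [] \<or> x < last st \<Longrightarrow> stk_aux (x#xs) st = stk_aux xs (x#st)"
  by (subst stk_aux.simps(2)) simp

lemma stk_pop: "st \<noteq> [] \<Longrightarrow> \<not> x < last st \<Longrightarrow> stk_aux (x#xs) st = hd st # stk_aux (x#xs) (tl st)"
  by (subst stk_aux.simps(2)) simp

declare stk_aux.simps(2)[simp del]

lemma stk_mset: "mset (stk_aux xs st) = mset xs + mset st"
proof (induction xs st rule: stk_aux.induct)
  case (2 x xs st)
  show ?case
  proof (cases "st = [] \<or> x < last st")
    case True then show ?thesis using 2(1) by (simp add: stk_push)
  next
    case False then show ?thesis using 2(2) by (cases st) (auto simp: stk_pop)
  qed
qed auto

lemma stk_set: "set (stk_aux xs st) = set xs \<union> set st"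
  by (metis mset_append set_mset_mset set_append stk_mset)

lemma stk_snoc:
  "(\<forall>y\<in>set xs \<union> set st. y \<le> m) \<Longrightarrow> stk_aux (xs @ [m]) st = stk_aux xs st @ [m]"
proof (induction xs st rule: stk_aux.induct)
  case 1
  then show ?case by (simp add: stk_push)
next
  case (2 x xs st)
  show ?case
  proof (cases "st = [] \<or> x < last st")
    case True then show ?thesis using 2 by (simp add: stk_push)
  next
    case False
    have "\<forall>y\<in>set (x#xs) \<union> set (tl st). y \<le> m" using 2(3) False by (cases st) auto
    then show ?thesis using 2(2)[OF False] False by (simp add: stk_pop)
  qed
next
  case (3 y ys)
  have "\<not> m < last (y # ys)"
    using 3(2) last_in_set[of "y#ys"] by (auto simp del: last.simps)
  then show ?case using 3 stk_pop[of "y#ys" m "[]"] by (simp del: last.simps)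
qed

lemma stk_nil: "stk_aux [] st = st"
  by (induction st) auto

lemma stk_last:
  "xs @ st \<noteq> [] \<Longrightarrow> (\<forall>y\<in>set st. y \<le> last st) \<Longrightarrow>
   \<forall>z\<in>set xs \<union> set st. z \<le> last (stk_aux xs st)"
proof (induction xs st rule: stk_aux.induct)
  case 1
  then show ?case by simp
next
  case (2 x xs st)
  show ?case
  proof (cases "st = [] \<or> x < last st")
    case True
    have inv: "\<forall>y\<in>set (x#st). y \<le> last (x#st)"
      using True 2(4) by (cases "st = []") auto
    have "\<forall>z\<in>set xs \<union> set (x#st). z \<le> last (stk_aux xs (x # st))"
      using 2(1)[OF True] inv by simp
    then show ?thesis using True by (simp add: stk_push)
  next
    case False
    then have ne: "st \<noteq> []" and le: "last st \<le> x" by auto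
    have inv: "\<forall>y\<in>set (tl st). y \<le> last (tl st)"
      using 2(4) ne by (cases st; cases "tl st") auto
    have IH: "\<forall>z\<in>set (x#xs) \<union> set (tl st). z \<le> last (stk_aux (x#xs) (tl st))"
      using 2(2)[OF False] inv by simp
    have ne2: "stk_aux (x#xs) (tl st) \<noteq> []"
      using stk_set[of "x#xs" "tl st"] by auto
    have "\<forall>z\<in>set st. z \<le> last (stk_aux (x#xs) (tl st))"
    proof
      fix z assume "z \<in> set st"
      then have "z \<le> x" using 2(4) le by auto
      then show "z \<le> last (stk_aux (x#xs) (tl st))" using IH by auto
    qed
    then show ?thesis using False IH ne2 ne by (simp add: stk_pop, blast)
  qed
next
  case (3 y ys)
  show ?case unfolding stk_nil using 3(3) by simp
qed

lemma s_set: "set (s12dot xs) = set xs"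
  by (simp add: s12dot_def stk_set)

lemma s_mset: "mset (s12dot xs) = mset xs"
  by (simp add: s12dot_def stk_mset)

lemma s_snoc: "\<forall>y\<in>set xs. y \<le> m \<Longrightarrow> s12dot (xs @ [m]) = s12dot xs @ [m]"
  by (simp add: s12dot_def stk_snoc)

lemma s_pow_snoc: "\<forall>y\<in>set xs. y \<le> m \<Longrightarrow> (s12dot ^^ j) (xs @ [m]) = (s12dot ^^ j) xs @ [m]"
proof (induction j)
  case 0 then show ?case by simp
next
  case (Suc j)
  have "set ((s12dot ^^ j) xs) = set xs"
    by (induction j) (auto simp: s_set)
  then show ?case using Suc by (simp add: s_snoc)
qed

lemma s_last: "xs \<noteq> [] \<Longrightarrow> \<forall>z\<in>set xs. z \<le> last (s12dot xs)"
  using stk_last[of xs "[]"] by (simp add: s12dot_def)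

lemma main: "is_perm (Suc k) \<pi> \<Longrightarrow> (s12dot ^^ k) \<pi> = [1..<Suc k+1]"
proof (induction k arbitrary: \<pi>)
  case 0
  then have "length \<pi> = 1" "set \<pi> = {1}" by (auto simp: is_perm_def)
  then have "\<pi> = [1]" by (cases \<pi>) auto
  then show ?case by simp
next
  case (Suc k)
  let ?n = "Suc (Suc k)"
  have p1: "length \<pi> = ?n" and p2: "distinct \<pi>" and p3: "set \<pi> = {1..?n}"
    using Suc(2) unfolding is_perm_def by auto
  have ne: "\<pi> \<noteq> []" using p1 by auto
  define t where "t = s12dot \<pi>"
  have tm: "mset t = mset \<pi>" unfolding t_def by (rule s_mset)
  have t1: "length t = ?n" using mset_eq_length[OF tm] p1 by simp
  have t2: "distinct t" using mset_eq_imp_distinct_iff[OF tm] p2 by simp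
  have t3: "set t = {1..?n}" using p3 unfolding t_def by (simp add: s_set)
  have tne: "t \<noteq> []" using t1 by auto
  have A: "\<forall>z\<in>set \<pi>. z \<le> last t" unfolding t_def using s_last[OF ne] .
  have B: "last t \<in> {1..?n}" using t3 last_in_set[OF tne] by blast
  have C: "?n \<in> set \<pi>" using p3 by simp
  have lt: "last t = ?n" proof -
    have "?n \<le> last t" using A C by blast
    then show ?thesis using B by simp
  qed
  define \<sigma> where "\<sigma> = butlast t"
  have teq: "t = \<sigma> @ [?n]" using append_butlast_last_id[OF tne] lt unfolding \<sigma>_def by simp
  have sd: "distinct (\<sigma> @ [?n])" using t2 teq by simp
  have sset: "set \<sigma> = {1..Suc k}"
  proof -
    have "insert ?n (set \<sigma>) = {1..?n}" using t3 teq by simp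
    moreover have "?n \<notin> set \<sigma>" using sd by simp
    ultimately have "set \<sigma> = {1..?n} - {?n}" by blast
    moreover have "{1..?n} - {?n} = {1..Suc k}" by (auto simp del: atLeastAtMost_iff simp add: atLeastAtMost_iff)
    ultimately show ?thesis by simp
  qed
  have sp: "is_perm (Suc k) \<sigma>"
    using sd sset t1 teq unfolding is_perm_def by simp
  have "(s12dot ^^ Suc k) \<pi> = (s12dot ^^ k) (\<sigma> @ [?n])"
    unfolding funpow_Suc_right comp_def t_def[symmetric] teq ..
  also have "\<dots> = (s12dot ^^ k) \<sigma> @ [?n]"
    using sset by (intro s_pow_snoc) auto
  also have "\<dots> = [1..<?n+1]" using Suc(1)[OF sp] upt_Suc_append[of 1 "Suc (Suc k)"] by (simp del: upt_Suc)
  finally show ?case .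
qed

theorem lemma3p2:
  fixes n :: nat and \<pi> :: "nat list"
  assumes "n \<ge> 1" and "is_perm n \<pi>"
  shows "(s12dot ^^ (n - 1)) \<pi> = [1..<n+1]"
proof -
  obtain k where k: "n = Suc k" using assms(1) by (cases n) auto
  have "is_perm (Suc k) \<pi>" using assms(2) unfolding k .
  then have "(s12dot ^^ k) \<pi> = [1..<Suc k+1]" by (rule main)
  then show ?thesis unfolding k diff_Suc_1 .
qed

end
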